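(* Let $n\ge5$ be odd and $M$ an $n\times n$ HW-matrix. There is no spin$^c$ set $S$ for $M$ with $|S|=n-2$.
   Context: $\mathcal S=\{0,1,2,3\}$ is the Klein four-group ($\mathbb Z_2$-vector space) with $x+x=0$, $1+2=3$, $1+3=2$, $2+3=1$. $\mathcal P_n$ is the power set of $\{1,\dots,n\}$ (addition = symmetric difference, product = intersection); $|U|_2=|U|\bmod 2$; $J_M(U)=\{j:\sum_{i\in U}M_{ij}=1\}$. $M$ is an HW-matrix if it has $1$ on the diagonal and $2$ or $3$ off the diagonal, all column sums are $0$, and $J_M(U)\ne\emptyset$ for all $U\ne\emptyset,\{1,\dots,n\}$. $S\in\mathcal P_n$ is a spin$^c$ set for $M$ if $|(J_M(U)+U)\cap S|_2=\binom{|U|}2\bmod 2$ for all $U\in\mathcal P_n$. *)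

theory Defs
  imports Main
begin

text \<open>The Klein four-group S = {0,1,2,3} is modelled by natural numbers 0..3 with
  addition given by bitwise exclusive or (so x+x=0, 1+2=3, 1+3=2, 2+3=1).
  Matrices are functions nat => nat => nat, indexed by {1..n}.\<close>

definition kadd :: "nat \<Rightarrow> nat \<Rightarrow> nat" where
  "kadd x y = xor x y"

definition ksum :: "(nat \<Rightarrow> nat \<Rightarrow> nat) \<Rightarrow> nat set \<Rightarrow> nat \<Rightarrow> nat" where
  "ksum M U j = Finite_Set.fold (\<lambda>i acc. kadd (M i j) acc) 0 U"

definition JM :: "nat \<Rightarrow> (nat \<Rightarrow> nat \<Rightarrow> nat) \<Rightarrow> nat set \<Rightarrow> nat set" where
  "JM n M U = {j \<in> {1..n}. ksum M U j = 1}"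

definition HW_matrix :: "nat \<Rightarrow> (nat \<Rightarrow> nat \<Rightarrow> nat) \<Rightarrow> bool" where
  "HW_matrix n M \<longleftrightarrow>
     (\<forall>i\<in>{1..n}. M i i = 1) \<and>
     (\<forall>i\<in>{1..n}. \<forall>j\<in>{1..n}. i \<noteq> j \<longrightarrow> M i j \<in> {2, 3}) \<and>
     (\<forall>j\<in>{1..n}. ksum M {1..n} j = 0) \<and>
     (\<forall>U. U \<subseteq> {1..n} \<longrightarrow> U \<noteq> {} \<longrightarrow> U \<noteq> {1..n} \<longrightarrow> JM n M U \<noteq> {})"

definition symdiff :: "'a set \<Rightarrow> 'a set \<Rightarrow> 'a set" where
  "symdiff A B = (A - B) \<union> (B - A)"

definition spinc_set :: "nat \<Rightarrow> (nat \<Rightarrow> nat \<Rightarrow> nat) \<Rightarrow> nat set \<Rightarrow> bool" where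
  "spinc_set n M S \<longleftrightarrow> S \<subseteq> {1..n} \<and>
     (\<forall>U. U \<subseteq> {1..n} \<longrightarrow>
        card (symdiff (JM n M U) U \<inter> S) mod 2 = (card U choose 2) mod 2)"

end

theory Submission
  imports Defs
begin

lemma cfc: "comp_fun_commute (\<lambda>i acc. kadd (M i j) acc)"
  by unfold_locales (auto simp: kadd_def fun_eq_iff xor.left_commute)
lemma ksum2: "i \<noteq> k \<Longrightarrow> ksum M {i,k} j = xor (M i j) (M k j)"
proof -
  assume "i \<noteq> k"
  interpret comp_fun_commute "\<lambda>i acc. kadd (M i j) acc" by (rule cfc)
  show ?thesis unfolding ksum_def using \<open>i \<noteq> k\<close> by (simp add: kadd_def)
qed
lemma ksum3: "i \<noteq> k \<Longrightarrow> i \<noteq> l \<Longrightarrow> k \<noteq> l \<Longrightarrow> ksum M {i,k,l} j = xor (M i j) (xor (M k j) (M l j))"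
proof -
  assume a: "i \<noteq> k" "i \<noteq> l" "k \<noteq> l"
  interpret comp_fun_commute "\<lambda>i acc. kadd (M i j) acc" by (rule cfc)
  have "ksum M {i,k,l} j = kadd (M i j) (ksum M {k,l} j)"
    unfolding ksum_def by (rule fold_insert) (use a in auto)
  then show ?thesis using ksum2[OF a(3), of M j] by (simp add: kadd_def)
qed

lemma tourn:
  fixes S :: "nat set" and g :: "nat \<Rightarrow> nat \<Rightarrow> bool"
  assumes fin: "finite S"
  and tour: "\<And>i k. i\<in>S \<Longrightarrow> k\<in>S \<Longrightarrow> i\<noteq>k \<Longrightarrow> g i k \<noteq> g k i"
  and nocyc: "\<And>i k l. i\<in>S \<Longrightarrow> k\<in>S \<Longrightarrow> l\<in>S \<Longrightarrow> i\<noteq>k \<Longrightarrow> i\<noteq>l \<Longrightarrow> k\<noteq>l \<Longrightarrow> g i k \<Longrightarrow> g k l \<Longrightarrow> g l i \<Longrightarrow> False"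
  and par: "\<And>i k. i\<in>S \<Longrightarrow> k\<in>S \<Longrightarrow> even (card {l\<in>S-{i}. g i l}) = even (card {l\<in>S-{k}. g k l})"
  and two: "i0\<in>S" "k0\<in>S" "i0\<noteq>k0"
  shows False
proof -
  define N where "N x = {l\<in>S-{x}. g x l}" for x
  have finN: "finite (N x)" for x unfolding N_def using fin by auto
  have step: "\<exists>l. l\<in>S \<and> l \<noteq> i \<and> g i l \<and> card (N l) < card (N i) \<and> card (N k) < card (N l)"
    if i: "i\<in>S" and k: "k\<in>S" and ik: "i\<noteq>k" and gik: "g i k" for i k
  proof -
    have sub: "N x \<subseteq> N y" if "x\<in>S" "y\<in>S" "y\<noteq>x" "g y x" for x y
    proof
      fix l assume "l \<in> N x"
      then have l: "l\<in>S" "l\<noteq>x" "g x l" unfolding N_def by auto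
      have "l \<noteq> y" using tour[OF that(1,2)] that(3,4) l(3) by auto
      moreover have "g y l"
      proof (rule ccontr)
        assume "\<not> g y l"
        then have "g l y" using tour[OF l(1) that(2)] \<open>l\<noteq>y\<close> by auto
        then show False using nocyc[OF that(2) that(1) l(1)] that l \<open>l\<noteq>y\<close> by auto
      qed
      ultimately show "l \<in> N y" using l unfolding N_def by auto
    qed
    have lt: "card (N x) < card (N y)" if "x\<in>S" "y\<in>S" "y\<noteq>x" "g y x" for x y
    proof -
      have "x \<in> N y" "x \<notin> N x" using that unfolding N_def by auto
      then have "N x \<subset> N y" using sub[OF that] by auto
      then show ?thesis using finN psubset_card_mono by blast
    qed
    have c1: "card (N k) < card (N i)" using lt[OF k i ik gik] .
    have "even (card (N k)) = even (card (N i))" using par[OF k i] unfolding N_def by simp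
    then have c2: "card (N k) + 2 \<le> card (N i)" using c1 by presburger
    have "card (N i - N k) = card (N i) - card (N k)"
      using card_Diff_subset[OF finN sub[OF k i ik gik]] .
    then have "card (N i - N k) \<ge> 2" using c2 by simp
    then have "card (N i - N k - {k}) \<ge> 1"
      using card_Diff_singleton_if[of "N i - N k" k] finN by (auto split: if_splits)
    then obtain l where l: "l \<in> N i - N k - {k}"
      by (metis card.empty all_not_in_conv not_one_le_zero)
    then have lS: "l\<in>S" "l\<noteq>i" "g i l" "l\<noteq>k" "\<not> g k l" unfolding N_def by auto
    then have "g l k" using tour[OF lS(1) k] by auto
    show ?thesis
      using lS lt[OF lS(1) i _ lS(3)] lt[OF k lS(1) _ \<open>g l k\<close>] ik by auto
  qed
  have main: "\<forall>i k. i\<in>S \<longrightarrow> k\<in>S \<longrightarrow> i\<noteq>k \<longrightarrow> g i k \<longrightarrow> card (N i) - card (N k) \<noteq> d" for d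
  proof (induction d rule: less_induct)
    case (less d)
    show ?case
    proof (intro allI impI)
      fix i k assume a: "i\<in>S" "k\<in>S" "i\<noteq>k" "g i k"
      obtain l where l: "l\<in>S" "l \<noteq> i" "g i l" "card (N l) < card (N i)" "card (N k) < card (N l)"
        using step[OF a] by blast
      show "card (N i) - card (N k) \<noteq> d"
      proof
        assume d: "card (N i) - card (N k) = d"
        have "card (N i) - card (N l) < d" using d l by linarith
        then show False using less[of "card (N i) - card (N l)"] a(1) l by auto
      qed
    qed
  qed
  show False
  proof (cases "g i0 k0")
    case True then show ?thesis using main two by blast
  next
    case False
    then have "g k0 i0" using tour[OF two] by auto
    then show ?thesis using main two by blast
  qed
qed

lemma h2: "(a::nat)\<in>{2,3} \<Longrightarrow> b\<in>{2,3} \<Longrightarrow> (xor a b = 1) = (a\<noteq>b)"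
  "(a::nat)\<in>{2,3} \<Longrightarrow> xor 1 a \<noteq> 1" "(a::nat)\<in>{2,3} \<Longrightarrow> xor a 1 \<noteq> 1"
  by auto
lemma h3: "(a::nat)\<in>{2,3} \<Longrightarrow> b\<in>{2,3} \<Longrightarrow> c\<in>{2,3} \<Longrightarrow> xor a (xor b c) \<noteq> 1"
  "(b::nat)\<in>{2,3} \<Longrightarrow> c\<in>{2,3} \<Longrightarrow> (xor 1 (xor b c) = 1) = (b = c)"
  "(a::nat)\<in>{2,3} \<Longrightarrow> c\<in>{2,3} \<Longrightarrow> (xor a (xor 1 c) = 1) = (a = c)"
  "(a::nat)\<in>{2,3} \<Longrightarrow> b\<in>{2,3} \<Longrightarrow> (xor a (xor b 1) = 1) = (a = b)"
  by auto

lemma card_sum: "finite A \<Longrightarrow> card {j\<in>A. P j} = (\<Sum>j\<in>A. of_bool (P j) :: nat)"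
proof -
  assume "finite A"
  moreover have "{j\<in>A. P j} = A \<inter> {x. P x}" by auto
  ultimately show ?thesis by simp
qed

lemma odd_transfer: "odd (x::nat) \<Longrightarrow> x + 2*y = z \<Longrightarrow> odd z" by presburger

lemma comb:
  fixes S :: "nat set" and e :: "nat \<Rightarrow> nat \<Rightarrow> bool"
  assumes fin: "finite S"
  and pair: "\<And>i k. i\<in>S \<Longrightarrow> k\<in>S \<Longrightarrow> i\<noteq>k \<Longrightarrow> odd (card {j\<in>S-{i,k}. e i j \<noteq> e k j})"
  and tri: "\<And>i k l. i\<in>S \<Longrightarrow> k\<in>S \<Longrightarrow> l\<in>S \<Longrightarrow> i\<noteq>k \<Longrightarrow> i\<noteq>l \<Longrightarrow> k\<noteq>l \<Longrightarrow>
              e k i = e l i \<or> e i k = e l k \<or> e i l = e k l"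
  and two: "i0\<in>S" "k0\<in>S" "i0\<noteq>k0"
  shows False
proof -
  define w where "w i = (\<Sum>j\<in>S-{i}. of_bool (e i j) :: nat)" for i
  define g where "g i k = (e i k \<noteq> odd (w k))" for i k
  have ob: "of_bool (p \<noteq> q) + 2 * of_bool (p \<and> q) = (of_bool p + of_bool q :: nat)" for p q
    by (cases p; cases q) auto
  have tour: "g i k \<noteq> g k i" if i: "i\<in>S" and k: "k\<in>S" and ik: "i\<noteq>k" for i k
  proof -
    let ?A = "S - {i,k}"
    have fA: "finite ?A" using fin by auto
    have "odd (\<Sum>j\<in>?A. of_bool (e i j \<noteq> e k j) :: nat)"
      by (subst card_sum[OF fA, symmetric]) (rule pair[OF i k ik])
    moreover have "(\<Sum>j\<in>?A. of_bool (e i j \<noteq> e k j) :: nat) + 2 * (\<Sum>j\<in>?A. of_bool (e i j \<and> e k j))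
       = (\<Sum>j\<in>?A. of_bool (e i j)) + (\<Sum>j\<in>?A. of_bool (e k j))"
      unfolding sum_distrib_left sum.distrib[symmetric] by (rule sum.cong[OF refl]) (rule ob)
    ultimately have o1: "odd ((\<Sum>j\<in>?A. of_bool (e i j) :: nat) + (\<Sum>j\<in>?A. of_bool (e k j)))"
      by (rule odd_transfer)
    have wi: "w i = of_bool (e i k) + (\<Sum>j\<in>?A. of_bool (e i j))"
      unfolding w_def using sum.remove[of "S-{i}" k "\<lambda>j. of_bool (e i j) :: nat"] fin k ik
      by (simp add: Diff_insert2[symmetric] insert_commute)
    have wk: "w k = of_bool (e k i) + (\<Sum>j\<in>?A. of_bool (e k j))"
      unfolding w_def using sum.remove[of "S-{k}" i "\<lambda>j. of_bool (e k j) :: nat"] fin i ik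
      by (simp add: Diff_insert2[symmetric] insert_commute)
    show ?thesis unfolding g_def using o1 wi wk by (cases "e i k"; cases "e k i") auto
  qed
  define W where "W = (\<Sum>l\<in>S. w l)"
  have scpar: "even (card {l\<in>S-{i}. g i l}) = even W" if i: "i\<in>S" for i
  proof -
    have fA: "finite (S-{i})" using fin by auto
    have "card {l\<in>S-{i}. g i l} mod 2 = (\<Sum>l\<in>S-{i}. of_bool (g i l) :: nat) mod 2"
      by (subst card_sum[OF fA]) (rule refl)
    also have "\<dots> = (\<Sum>l\<in>S-{i}. of_bool (g i l) mod 2 :: nat) mod 2" by (rule mod_sum_eq[symmetric])
    also have "\<dots> = (\<Sum>l\<in>S-{i}. (of_bool (e i l) + w l) mod 2 :: nat) mod 2"
    proof (rule arg_cong[where f="\<lambda>x. x mod 2"], rule sum.cong[OF refl])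
      fix l show "of_bool (g i l) mod 2 = (of_bool (e i l) + w l) mod 2"
        unfolding g_def by (cases "e i l"; cases "even (w l)") (auto simp: even_iff_mod_2_eq_zero odd_iff_mod_2_eq_one mod_Suc)
    qed
    also have "\<dots> = (\<Sum>l\<in>S-{i}. (of_bool (e i l) + w l) :: nat) mod 2" by (rule mod_sum_eq)
    also have "\<dots> = (w i + (\<Sum>l\<in>S-{i}. w l)) mod 2" by (simp add: sum.distrib w_def)
    also have "\<dots> = W mod 2" unfolding W_def using sum.remove[OF fin i, of w] by simp
    finally show ?thesis by presburger
  qed
  show False
  proof (rule tourn[OF fin, of g])
    show "g i k \<noteq> g k i" if "i\<in>S" "k\<in>S" "i\<noteq>k" for i k using tour that by blast
    show "even (card {l\<in>S-{i}. g i l}) = even (card {l\<in>S-{k}. g k l})" if "i\<in>S" "k\<in>S" for i k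
      using scpar that by blast
    show "i0\<in>S" "k0\<in>S" "i0\<noteq>k0" by (fact two)+
    show False if a: "i\<in>S" "k\<in>S" "l\<in>S" "i\<noteq>k" "i\<noteq>l" "k\<noteq>l" "g i k" "g k l" "g l i" for i k l
    proof -
      have "\<not> g k i" "\<not> g l k" "\<not> g i l" using tour a by blast+
      moreover have "e k i = e l i \<or> e i k = e l k \<or> e i l = e k l" using tri[OF a(1-6)] .
      ultimately show False using a unfolding g_def by auto
    qed
  qed
qed

theorem mainTheorem17:
  fixes n :: nat and M :: "nat \<Rightarrow> nat \<Rightarrow> nat"
  assumes "odd n" and "n \<ge> 5" and "HW_matrix n M"
  shows "\<not> (\<exists>S. spinc_set n M S \<and> card S = n - 2)"
proof
  assume "\<exists>S. spinc_set n M S \<and> card S = n - 2"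
  then obtain S where sp: "spinc_set n M S" and cS: "card S = n - 2" by blast
  have Ssub: "S \<subseteq> {1..n}" and cond: "\<And>U. U \<subseteq> {1..n} \<Longrightarrow>
        card (symdiff (JM n M U) U \<inter> S) mod 2 = (card U choose 2) mod 2"
    using sp unfolding spinc_set_def by auto
  have diag: "\<And>i. i\<in>{1..n} \<Longrightarrow> M i i = 1"
   and offv: "\<And>i j. i\<in>{1..n} \<Longrightarrow> j\<in>{1..n} \<Longrightarrow> i \<noteq> j \<Longrightarrow> M i j \<in> {2,3}"
   and ne: "\<And>U. U \<subseteq> {1..n} \<Longrightarrow> U \<noteq> {} \<Longrightarrow> U \<noteq> {1..n} \<Longrightarrow> JM n M U \<noteq> {}"
    using assms(3) unfolding HW_matrix_def by auto
  have fin: "finite S" using Ssub finite_subset by blast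
  define e where "e i j = (M i j = 3)" for i j
  have eq23: "(M i j = M k j) = (e i j = e k j)" if "M i j \<in> {2,3}" "M k j \<in> {2,3}" for i j k
    using that unfolding e_def by auto
  have "card S \<ge> 2" using cS assms(2) by simp
  then obtain T where "T \<subseteq> S" "card T = 2" by (meson obtain_subset_with_card_n)
  then obtain a b where ab: "a\<in>S" "b\<in>S" "a\<noteq>b" by (auto simp: card_Suc_eq numeral_2_eq_2)
  show False
  proof (rule comb[OF fin, of e a b])
    show "odd (card {j\<in>S-{i,k}. e i j \<noteq> e k j})" if i: "i\<in>S" and k: "k\<in>S" and ik: "i\<noteq>k" for i k
    proof -
      have iN: "i\<in>{1..n}" and kN: "k\<in>{1..n}" using i k Ssub by auto
      have J: "JM n M {i,k} = {j\<in>{1..n}-{i,k}. M i j \<noteq> M k j}"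
      proof -
        have "(ksum M {i,k} j = 1) = (j \<notin> {i,k} \<and> M i j \<noteq> M k j)" if j: "j\<in>{1..n}" for j
        proof -
          have ks: "ksum M {i,k} j = xor (M i j) (M k j)" using ksum2[OF ik] .
          show ?thesis
          proof (cases "j = i")
            case True then show ?thesis using ks diag[OF iN] offv[OF kN iN] ik h2(2) by auto
          next
            case False
            show ?thesis
            proof (cases "j = k")
              case True then show ?thesis using ks diag[OF kN] offv[OF iN kN] ik h2(3) by auto
            next
              case False2: False
              then show ?thesis using ks offv[OF iN j] offv[OF kN j] False h2(1) by auto
            qed
          qed
        qed
        then show ?thesis unfolding JM_def by auto
      qed
      have X: "symdiff (JM n M {i,k}) {i,k} \<inter> S = insert i (insert k {j\<in>S-{i,k}. e i j \<noteq> e k j})"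
      proof -
        have "j \<in> S - {i,k} \<Longrightarrow> (M i j \<noteq> M k j) = (e i j \<noteq> e k j)" for j
          using eq23[of i j k] offv[of i j] offv[of k j] iN kN Ssub by auto
        then show ?thesis unfolding J symdiff_def using i k Ssub by auto
      qed
      have "card (symdiff (JM n M {i,k}) {i,k} \<inter> S) = card {j\<in>S-{i,k}. e i j \<noteq> e k j} + 2"
        unfolding X using fin ik by simp
      moreover have "card {i,k} = 2" using ik by simp
      ultimately show ?thesis using cond[of "{i,k}"] iN kN by (simp add: odd_iff_mod_2_eq_one)
    qed
    show "e k i = e l i \<or> e i k = e l k \<or> e i l = e k l"
      if i: "i\<in>S" and k: "k\<in>S" and l: "l\<in>S" and d: "i\<noteq>k" "i\<noteq>l" "k\<noteq>l" for i k l
    proof -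
      have iN: "i\<in>{1..n}" and kN: "k\<in>{1..n}" and lN: "l\<in>{1..n}" using i k l Ssub by auto
      have U: "{i,k,l} \<subseteq> {1..n}" using iN kN lN by auto
      have "card {i,k,l} = 3" using d by simp
      then have "{i,k,l} \<noteq> {1..n}" using assms(2) by auto
      then have "JM n M {i,k,l} \<noteq> {}" using ne[OF U] by auto
      then obtain j where j: "j\<in>{1..n}" and ks1: "ksum M {i,k,l} j = 1" unfolding JM_def by auto
      have ks: "xor (M i j) (xor (M k j) (M l j)) = 1" using ks1 ksum3[OF d] by simp
      have "M k i = M l i \<or> M i k = M l k \<or> M i l = M k l"
      proof (cases "j = i")
        case True then show ?thesis using ks diag[OF iN] offv[OF kN iN] offv[OF lN iN] d h3(2) by auto
      next
        case F1: False
        show ?thesis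
        proof (cases "j = k")
          case True then show ?thesis using ks diag[OF kN] offv[OF iN kN] offv[OF lN kN] d h3(3) by auto
        next
          case F2: False
          show ?thesis
          proof (cases "j = l")
            case True then show ?thesis using ks diag[OF lN] offv[OF iN lN] offv[OF kN lN] d h3(4) by auto
          next
            case False
            then show ?thesis using ks offv[OF iN j] offv[OF kN j] offv[OF lN j] F1 F2 h3(1) by auto
          qed
        qed
      qed
      then show ?thesis
        using eq23[of k i l] eq23[of i k l] eq23[of i l k] offv iN kN lN d by auto
    qed
    show "a\<in>S" "b\<in>S" "a\<noteq>b" by (fact ab)+
  qed
qed

end
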